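(* (i) For every $n\ge 2$ there is a locally finite $n$-directed-distributive variety which is not $(2n-1)$-reversed-modular, hence not $(2n-2)$-modular. (ii) Every $n$-directed-distributive variety satisfies the congruence identity $\alpha(\beta\circ\gamma\circ\beta)\subseteq\alpha\beta\circ\alpha\gamma\circ\stackrel{2n-1}{\dots}\circ\alpha\beta$; in particular it is $(2n-1)$-modular.
   Context: Directed J\'onsson terms: ternary terms $t_0,\dots,t_n$ with $t_0(x,y,z)=x$, $t_n(x,y,z)=z$, $t_h(x,y,x)=x$ for all $0\le h\le n$, and $t_h(x,z,z)=t_{h+1}(x,x,z)$ for all $0\le h<n$. A variety is $n$-directed-distributive if it has directed J\'onsson terms $t_0,\dots,t_n$. Day terms: $4$-ary $u_0,\dots,u_m$ with $u_k(x,y,y,x)=x$ for all $k$, $u_0(x,y,z,w)=x$, $u_m(x,y,z,w)=w$, $u_k(x,x,w,w)=u_{k+1}(x,x,w,w)$ for even $k$, $u_k(x,y,y,w)=u_{k+1}(x,y,y,w)$ for odd $k$; reversed Day terms: even/odd exchanged in these last two. $m$-modular ($m$-reversed-modular): having Day (reversed Day) terms $u_0,\dots,u_m$. In congruence identities juxtaposition is intersection, $\circ$ composition, and $X\circ Y\circ\stackrel{k}{\dots}\circ Z$ is the alternating composition $X\circ Y\circ X\circ\cdots$ with $k$ factors (last factor $Z$). *)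

theory Defs
  imports Main
begin

datatype ('f, 'v) trm = Var 'v | Fun 'f "('f, 'v) trm list"

fun wf_trm :: "('f \<Rightarrow> nat) \<Rightarrow> ('f, 'v) trm \<Rightarrow> bool" where
  "wf_trm ar (Var x) = True"
| "wf_trm ar (Fun f ts) = (length ts = ar f \<and> (\<forall>t\<in>set ts. wf_trm ar t))"

fun vars_trm :: "('f, 'v) trm \<Rightarrow> 'v set" where
  "vars_trm (Var x) = {x}"
| "vars_trm (Fun f ts) = (\<Union>t\<in>set ts. vars_trm t)"

fun subst_trm :: "('v \<Rightarrow> ('f, 'w) trm) \<Rightarrow> ('f, 'v) trm \<Rightarrow> ('f, 'w) trm" where
  "subst_trm \<sigma> (Var x) = \<sigma> x"
| "subst_trm \<sigma> (Fun f ts) = Fun f (map (subst_trm \<sigma>) ts)"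

text \<open>A variety of signature ar is presented by a set E of identities between
  well-formed terms in the variables 0,1,2,...\<close>

definition variety :: "('f \<Rightarrow> nat) \<Rightarrow> (('f, nat) trm \<times> ('f, nat) trm) set \<Rightarrow> bool" where
  "variety ar E \<longleftrightarrow> (\<forall>(s, t)\<in>E. wf_trm ar s \<and> wf_trm ar t)"

text \<open>Identities holding in the variety: the equational theory generated by E
  (equal, by Birkhoff's completeness theorem, to the identities valid in all members).\<close>

inductive eqth :: "('f \<Rightarrow> nat) \<Rightarrow> (('f, nat) trm \<times> ('f, nat) trm) set
    \<Rightarrow> ('f, nat) trm \<Rightarrow> ('f, nat) trm \<Rightarrow> bool"
  for ar E where
  eq_refl: "wf_trm ar t \<Longrightarrow> eqth ar E t t"
| eq_sym: "eqth ar E s t \<Longrightarrow> eqth ar E t s"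
| eq_trans: "eqth ar E s t \<Longrightarrow> eqth ar E t u \<Longrightarrow> eqth ar E s u"
| eq_ax: "(s, t) \<in> E \<Longrightarrow> (\<forall>x. wf_trm ar (\<sigma> x)) \<Longrightarrow>
            eqth ar E (subst_trm \<sigma> s) (subst_trm \<sigma> t)"
| eq_cong: "length ss = ar f \<Longrightarrow> list_all2 (eqth ar E) ss ts \<Longrightarrow>
            eqth ar E (Fun f ss) (Fun f ts)"

type_synonym ('a, 'f) alg = "'a set \<times> ('f \<Rightarrow> 'a list \<Rightarrow> 'a)"

definition is_alg :: "('f \<Rightarrow> nat) \<Rightarrow> ('a, 'f) alg \<Rightarrow> bool" where
  "is_alg ar A \<longleftrightarrow> (\<forall>f xs. length xs = ar f \<and> set xs \<subseteq> fst A \<longrightarrow> snd A f xs \<in> fst A)"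

fun eval_trm :: "('a, 'f) alg \<Rightarrow> ('v \<Rightarrow> 'a) \<Rightarrow> ('f, 'v) trm \<Rightarrow> 'a" where
  "eval_trm A \<rho> (Var x) = \<rho> x"
| "eval_trm A \<rho> (Fun f ts) = snd A f (map (eval_trm A \<rho>) ts)"

definition in_variety :: "('f \<Rightarrow> nat) \<Rightarrow> (('f, nat) trm \<times> ('f, nat) trm) set \<Rightarrow> ('a, 'f) alg \<Rightarrow> bool" where
  "in_variety ar E A \<longleftrightarrow> is_alg ar A \<and>
     (\<forall>(s, t)\<in>E. \<forall>\<rho>. (\<forall>x. \<rho> x \<in> fst A) \<longrightarrow> eval_trm A \<rho> s = eval_trm A \<rho> t)"

definition congruence :: "('f \<Rightarrow> nat) \<Rightarrow> ('a, 'f) alg \<Rightarrow> ('a \<times> 'a) set \<Rightarrow> bool" where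
  "congruence ar A \<theta> \<longleftrightarrow> equiv (fst A) \<theta> \<and>
     (\<forall>f xs ys. length xs = ar f \<and> list_all2 (\<lambda>a b. (a, b) \<in> \<theta>) xs ys
        \<longrightarrow> (snd A f xs, snd A f ys) \<in> \<theta>)"

text \<open>Alternating relational composition X o Y o X o ... with k factors (k \<ge> 1).\<close>
fun alt_comp :: "('a \<times> 'a) set \<Rightarrow> ('a \<times> 'a) set \<Rightarrow> nat \<Rightarrow> ('a \<times> 'a) set" where
  "alt_comp X Y 0 = Id"
| "alt_comp X Y (Suc 0) = X"
| "alt_comp X Y (Suc (Suc k)) = X O alt_comp Y X (Suc k)"

text \<open>Terms in the variables 0..k-1; the variety is locally finite iff every
  finitely generated free algebra F_V(k) (terms in k variables modulo the
  equational theory) is finite.\<close>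
definition trms_in :: "('f \<Rightarrow> nat) \<Rightarrow> nat \<Rightarrow> ('f, nat) trm set" where
  "trms_in ar k = {t. wf_trm ar t \<and> vars_trm t \<subseteq> {..<k}}"

definition locally_finite :: "('f \<Rightarrow> nat) \<Rightarrow> (('f, nat) trm \<times> ('f, nat) trm) set \<Rightarrow> bool" where
  "locally_finite ar E \<longleftrightarrow>
     (\<forall>k. finite ((\<lambda>t. {s \<in> trms_in ar k. eqth ar E s t}) ` trms_in ar k))"

abbreviation (input) "vx \<equiv> Var (0::nat)"
abbreviation (input) "vy \<equiv> Var (1::nat)"
abbreviation (input) "vz \<equiv> Var (2::nat)"
abbreviation (input) "vw \<equiv> Var (3::nat)"

definition app3 :: "('f, nat) trm \<Rightarrow> ('f, nat) trm \<Rightarrow> ('f, nat) trm \<Rightarrow> ('f, nat) trm \<Rightarrow> ('f, nat) trm" where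
  "app3 t a b c = subst_trm (\<lambda>i. if i = 0 then a else if i = 1 then b else c) t"

definition app4 :: "('f, nat) trm \<Rightarrow> ('f, nat) trm \<Rightarrow> ('f, nat) trm \<Rightarrow> ('f, nat) trm \<Rightarrow> ('f, nat) trm \<Rightarrow> ('f, nat) trm" where
  "app4 t a b c d = subst_trm (\<lambda>i. if i = 0 then a else if i = 1 then b else if i = 2 then c else d) t"

text \<open>n-directed-distributive: directed Jonsson terms t_0..t_n (ternary terms in x=0,y=1,z=2).\<close>
definition directed_jonsson :: "('f \<Rightarrow> nat) \<Rightarrow> (('f, nat) trm \<times> ('f, nat) trm) set \<Rightarrow> nat \<Rightarrow> bool" where
  "directed_jonsson ar E n \<longleftrightarrow> (\<exists>t :: nat \<Rightarrow> ('f, nat) trm.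
     (\<forall>h\<le>n. t h \<in> trms_in ar 3) \<and>
     eqth ar E (t 0) vx \<and> eqth ar E (t n) vz \<and>
     (\<forall>h\<le>n. eqth ar E (app3 (t h) vx vy vx) vx) \<and>
     (\<forall>h<n. eqth ar E (app3 (t h) vx vz vz) (app3 (t (Suc h)) vx vx vz)))"

text \<open>m-modular: Day terms u_0..u_m (4-ary terms in x=0,y=1,z=2,w=3).\<close>
definition day_modular :: "('f \<Rightarrow> nat) \<Rightarrow> (('f, nat) trm \<times> ('f, nat) trm) set \<Rightarrow> nat \<Rightarrow> bool" where
  "day_modular ar E m \<longleftrightarrow> (\<exists>u :: nat \<Rightarrow> ('f, nat) trm.
     (\<forall>k\<le>m. u k \<in> trms_in ar 4) \<and>
     (\<forall>k\<le>m. eqth ar E (app4 (u k) vx vy vy vx) vx) \<and>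
     eqth ar E (u 0) vx \<and> eqth ar E (u m) vw \<and>
     (\<forall>k<m. even k \<longrightarrow> eqth ar E (app4 (u k) vx vx vw vw) (app4 (u (Suc k)) vx vx vw vw)) \<and>
     (\<forall>k<m. odd k \<longrightarrow> eqth ar E (app4 (u k) vx vy vy vw) (app4 (u (Suc k)) vx vy vy vw)))"

text \<open>m-reversed-modular: reversed Day terms (even/odd exchanged).\<close>
definition reversed_modular :: "('f \<Rightarrow> nat) \<Rightarrow> (('f, nat) trm \<times> ('f, nat) trm) set \<Rightarrow> nat \<Rightarrow> bool" where
  "reversed_modular ar E m \<longleftrightarrow> (\<exists>u :: nat \<Rightarrow> ('f, nat) trm.
     (\<forall>k\<le>m. u k \<in> trms_in ar 4) \<and>
     (\<forall>k\<le>m. eqth ar E (app4 (u k) vx vy vy vx) vx) \<and>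
     eqth ar E (u 0) vx \<and> eqth ar E (u m) vw \<and>
     (\<forall>k<m. odd k \<longrightarrow> eqth ar E (app4 (u k) vx vx vw vw) (app4 (u (Suc k)) vx vx vw vw)) \<and>
     (\<forall>k<m. even k \<longrightarrow> eqth ar E (app4 (u k) vx vy vy vw) (app4 (u (Suc k)) vx vy vy vw)))"

end

theory Submission
  imports Defs "HOL-Library.FuncSet"
begin


lemma wf_subst: "wf_trm ar t \<Longrightarrow> (\<forall>x. wf_trm ar (\<sigma> x)) \<Longrightarrow> wf_trm ar (subst_trm \<sigma> t)"
  by (induction t) auto

lemma subst_subst: "subst_trm \<sigma> (subst_trm \<tau> t) = subst_trm (\<lambda>x. subst_trm \<sigma> (\<tau> x)) t"
  by (induction t) auto

lemma subst_Var: "subst_trm Var t = t"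
  by (induction t) (auto simp: map_idI)

lemma vars_subst: "vars_trm (subst_trm \<sigma> t) = (\<Union>x\<in>vars_trm t. vars_trm (\<sigma> x))"
  by (induction t) auto

lemma eval_subst: "eval_trm A \<rho> (subst_trm \<sigma> t) = eval_trm A (\<lambda>x. eval_trm A \<rho> (\<sigma> x)) t"
  by (induction t) (auto simp: comp_def intro!: arg_cong[where f="snd A _"])

lemma eqth_wf: "eqth ar E s t \<Longrightarrow> variety ar E \<Longrightarrow> wf_trm ar s \<and> wf_trm ar t"
proof (induction rule: eqth.induct)
  case (eq_ax s t \<sigma>)
  then show ?case by (auto simp: variety_def intro!: wf_subst)
next
  case (eq_cong ss f ts)
  then show ?case by (auto simp: list_all2_conv_all_nth in_set_conv_nth)
qed auto

lemma eqth_subst: "eqth ar E s t \<Longrightarrow> (\<forall>x. wf_trm ar (\<sigma> x)) \<Longrightarrow> eqth ar E (subst_trm \<sigma> s) (subst_trm \<sigma> t)"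
proof (induction rule: eqth.induct)
  case (eq_refl t)
  then show ?case by (auto intro!: eqth.eq_refl wf_subst)
next
  case (eq_sym s t)
  then show ?case by (auto intro: eqth.eq_sym)
next
  case (eq_trans s t u)
  then show ?case by (auto intro: eqth.eq_trans)
next
  case (eq_ax s t \<tau>)
  then show ?case
    using eqth.eq_ax[where \<sigma>="\<lambda>x. subst_trm \<sigma> (\<tau> x)" and ar=ar and E=E]
    by (simp add: subst_subst wf_subst)
next
  case (eq_cong ss f ts)
  then show ?case
    by (auto intro!: eqth.eq_cong simp: list_all2_map1 list_all2_map2 elim: list_all2_mono)
qed

lemma eval_closed: "is_alg ar A \<Longrightarrow> wf_trm ar t \<Longrightarrow> (\<forall>x. \<rho> x \<in> fst A) \<Longrightarrow> eval_trm A \<rho> t \<in> fst A"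
proof (induction t)
  case (Var x) then show ?case by simp
next
  case (Fun f ts)
  then have "set (map (eval_trm A \<rho>) ts) \<subseteq> fst A" by auto
  then show ?case using Fun unfolding is_alg_def by auto
qed

lemma eqth_sound: "eqth ar E s t \<Longrightarrow> in_variety ar E A \<Longrightarrow> (\<forall>x. \<rho> x \<in> fst A) \<Longrightarrow>
   eval_trm A \<rho> s = eval_trm A \<rho> t"
proof (induction arbitrary: \<rho> rule: eqth.induct)
  case (eq_ax s t \<sigma>)
  have "\<forall>x. eval_trm A \<rho> (\<sigma> x) \<in> fst A"
    using eq_ax eval_closed[of ar A] by (auto simp: in_variety_def)
  then show ?case using eq_ax by (auto simp: eval_subst in_variety_def)
next
  case (eq_cong ss f ts)
  then have "map (eval_trm A \<rho>) ss = map (eval_trm A \<rho>) ts"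
    by (auto simp: list_all2_conv_all_nth intro!: nth_equalityI)
  then show ?case by simp
qed auto

lemma eval_cong: "congruence ar A \<theta> \<Longrightarrow> wf_trm ar t \<Longrightarrow> (\<forall>x. (\<rho> x, \<rho>' x) \<in> \<theta>) \<Longrightarrow>
   (eval_trm A \<rho> t, eval_trm A \<rho>' t) \<in> \<theta>"
proof (induction t)
  case (Var x) then show ?case by simp
next
  case (Fun f ts)
  have "list_all2 (\<lambda>a b. (a, b) \<in> \<theta>) (map (eval_trm A \<rho>) ts) (map (eval_trm A \<rho>') ts)"
    using Fun by (auto simp: list_all2_conv_all_nth)
  then show ?case using Fun unfolding congruence_def by auto
qed


lemma eval_app3: "eval_trm A \<rho> (app3 t a b c) =
   eval_trm A (\<lambda>i. if i = 0 then eval_trm A \<rho> a else if i = 1 then eval_trm A \<rho> b else eval_trm A \<rho> c) t"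
  unfolding app3_def eval_subst by (rule arg_cong[where f="\<lambda>r. eval_trm A r t"]) (simp add: fun_eq_iff)

lemma eval_app4: "eval_trm A \<rho> (app4 t a b c d) =
   eval_trm A (\<lambda>i. if i = 0 then eval_trm A \<rho> a else if i = 1 then eval_trm A \<rho> b else if i = 2 then eval_trm A \<rho> c else eval_trm A \<rho> d) t"
  unfolding app4_def eval_subst by (rule arg_cong[where f="\<lambda>r. eval_trm A r t"]) (simp add: fun_eq_iff)

lemma app4_app3: "app4 (app3 t a b c) p q r s = app3 t (app4 a p q r s) (app4 b p q r s) (app4 c p q r s)"
  unfolding app3_def app4_def subst_subst
  by (rule arg_cong[where f="\<lambda>\<sigma>. subst_trm \<sigma> t"]) (simp add: fun_eq_iff)

lemma subst_app3: "subst_trm \<sigma> (app3 t a b c) = app3 t (subst_trm \<sigma> a) (subst_trm \<sigma> b) (subst_trm \<sigma> c)"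
  unfolding app3_def subst_subst
  by (rule arg_cong[where f="\<lambda>\<sigma>. subst_trm \<sigma> t"]) (simp add: fun_eq_iff)

lemma app4_Var[simp]: "app4 (Var i) p q r s = (if i = 0 then p else if i = 1 then q else if i = 2 then r else s)"
  by (simp add: app4_def)

lemma app3_Var[simp]: "app3 (Var i) p q r = (if i = 0 then p else if i = 1 then q else r)"
  by (simp add: app3_def)

lemma wf_app3: "wf_trm ar t \<Longrightarrow> wf_trm ar a \<Longrightarrow> wf_trm ar b \<Longrightarrow> wf_trm ar c \<Longrightarrow> wf_trm ar (app3 t a b c)"
  unfolding app3_def by (rule wf_subst) auto

lemma vars_app3: "vars_trm t \<subseteq> {..<3} \<Longrightarrow> vars_trm (app3 t a b c) \<subseteq> vars_trm a \<union> vars_trm b \<union> vars_trm c"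
  unfolding app3_def vars_subst by (auto split: if_splits)

lemma alt_comp_absorb:
  assumes "trans X" shows "X O alt_comp X Y (Suc k) \<subseteq> alt_comp X Y (Suc k)"
proof (cases k)
  case 0 then show ?thesis using assms by (auto dest: transD)
next
  case (Suc k') then show ?thesis using assms by (auto dest: transD)
qed

lemma alt_comp3: "alt_comp X Y (Suc (Suc (Suc m))) = X O (Y O alt_comp X Y (Suc m))"
  by simp

lemma part2_cong:
  assumes var: "variety ar E" and dj: "directed_jonsson ar E n"
    and A: "in_variety ar E A" and ca: "congruence ar A \<alpha>" and cb: "congruence ar A \<beta>" and cg: "congruence ar A \<gamma>"
  shows "\<alpha> \<inter> (\<beta> O \<gamma> O \<beta>) \<subseteq> alt_comp (\<alpha> \<inter> \<beta>) (\<alpha> \<inter> \<gamma>) (2 * n - 1)"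
proof
  fix pr assume pr: "pr \<in> \<alpha> \<inter> (\<beta> O \<gamma> O \<beta>)"
  obtain t where tin: "\<forall>h\<le>n. t h \<in> trms_in ar 3" and t0: "eqth ar E (t 0) vx" and tn: "eqth ar E (t n) vz"
    and tid: "\<forall>h\<le>n. eqth ar E (app3 (t h) vx vy vx) vx"
    and tst: "\<forall>h<n. eqth ar E (app3 (t h) vx vz vz) (app3 (t (Suc h)) vx vx vz)"
    using dj unfolding directed_jonsson_def by blast
  obtain a b c d where pr_eq: "pr = (a, d)" and ad: "(a, d) \<in> \<alpha>" and ab: "(a, b) \<in> \<beta>" and bc: "(b, c) \<in> \<gamma>"
    and cd: "(c, d) \<in> \<beta>" using pr by auto
  have eqa: "equiv (fst A) \<alpha>" and eqb: "equiv (fst A) \<beta>" and eqg: "equiv (fst A) \<gamma>"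
    using ca cb cg by (auto simp: congruence_def)
  have carr: "a \<in> fst A" "b \<in> fst A" "c \<in> fst A" "d \<in> fst A"
    using ad ab bc cd eqa eqb eqg by (auto simp: equiv_def refl_on_def)
  define T where "T h x y z = eval_trm A (\<lambda>i. if i = 0 then x else if i = 1 then y else z) (t h)" for h x y z
  have rho: "\<forall>i. (if i = 0 then x else if i = 1 then y else z) \<in> fst A"
    if "x \<in> fst A" "y \<in> fst A" "z \<in> fst A" for x y z
    using that by auto
  have T0: "T 0 x y z = x" if "x \<in> fst A" "y \<in> fst A" "z \<in> fst A" for x y z
    using eqth_sound[OF t0 A rho[OF that]] by (simp add: T_def)
  have Tn: "T n x y z = z" if "x \<in> fst A" "y \<in> fst A" "z \<in> fst A" for x y z
    using eqth_sound[OF tn A rho[OF that]] by (simp add: T_def)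
  have Tid: "T h x y x = x" if "h \<le> n" "x \<in> fst A" "y \<in> fst A" for h x y
  proof -
    have "eval_trm A (\<lambda>i. if i = 0 then x else if i = 1 then y else x) (app3 (t h) vx vy vx) = x"
      using eqth_sound[OF tid[rule_format, OF that(1)] A rho[OF that(2,3,2)]] by simp
    then show ?thesis by (simp add: eval_app3 T_def cong: if_cong)
  qed
  have Tst: "T h x z z = T (Suc h) x x z" if "h < n" "x \<in> fst A" "z \<in> fst A" for h x z
  proof -
    have "eval_trm A (\<lambda>i. if i = 0 then x else if i = 1 then z else z) (app3 (t h) vx vz vz)
        = eval_trm A (\<lambda>i. if i = 0 then x else if i = 1 then z else z) (app3 (t (Suc h)) vx vx vz)"
      using eqth_sound[OF tst[rule_format, OF that(1)] A rho[OF that(2,3,3)]] by simp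
    then show ?thesis by (simp add: eval_app3 T_def cong: if_cong)
  qed
  have Tcong: "(T h x y z, T h x' y' z') \<in> \<theta>"
    if "h \<le> n" "congruence ar A \<theta>" "(x, x') \<in> \<theta>" "(y, y') \<in> \<theta>" "(z, z') \<in> \<theta>" for h \<theta> x y z x' y' z'
    unfolding T_def
    by (rule eval_cong[OF that(2)]) (use tin that in \<open>auto simp: trms_in_def\<close>)
  let ?X = "\<alpha> \<inter> \<beta>" and ?Y = "\<alpha> \<inter> \<gamma>"
  have transX: "trans ?X" using eqa eqb by (auto simp: equiv_def intro: trans_Int)
  have refl: "(x, x) \<in> \<theta>" if "equiv (fst A) \<theta>" "x \<in> fst A" for x \<theta>
    using that by (auto simp: equiv_def refl_on_def)
  have da: "(d, a) \<in> \<alpha>" using ad eqa by (auto simp: equiv_def sym_def)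
  have Ta: "(T h a u d, a) \<in> \<alpha>" if "h \<le> n" "u \<in> fst A" for h u
  proof -
    have "(T h a u d, T h a u a) \<in> \<alpha>"
      by (rule Tcong[OF that(1) ca]) (use refl[OF eqa] carr that da in auto)
    then show ?thesis using Tid[OF that(1) carr(1) that(2)] by simp
  qed
  have Taa: "(T h a u d, T h a v d) \<in> \<alpha>" if "h \<le> n" "u \<in> fst A" "v \<in> fst A" for h u v
    using Ta[OF that(1,2)] Ta[OF that(1,3)] eqa by (auto simp: equiv_def sym_def dest: transD)
  have step: "(T h a a d, T h a b d) \<in> ?X \<and> (T h a b d, T h a c d) \<in> ?Y \<and> (T h a c d, T (Suc h) a a d) \<in> ?X"
    if "h < n" for h
  proof -
    have hn: "h \<le> n" using that by simp
    have 1: "(T h a a d, T h a b d) \<in> \<beta>"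
      by (rule Tcong[OF hn cb]) (use refl[OF eqb] carr ab in auto)
    have 2: "(T h a b d, T h a c d) \<in> \<gamma>"
      by (rule Tcong[OF hn cg]) (use refl[OF eqg] carr bc in auto)
    have "(T h a c d, T h a d d) \<in> \<beta>"
      by (rule Tcong[OF hn cb]) (use refl[OF eqb] carr cd in auto)
    moreover have "(T h a c d, T h a d d) \<in> \<alpha>" using Taa[OF hn carr(3) carr(4)] .
    ultimately show ?thesis using 1 2 Taa[OF hn carr(1) carr(2)] Taa[OF hn carr(2) carr(3)]
      Tst[OF that carr(1) carr(4)] by auto
  qed
  have main: "(T h a a d, d) \<in> alt_comp ?X ?Y (Suc (Suc (Suc (2 * k))))" if "Suc (h + k) = n" for k h
    using that
  proof (induction k arbitrary: h)
    case 0
    then have "T (Suc h) a a d = d" using Tn carr by simp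
    then show ?case using step[of h] 0 by auto
  next
    case (Suc k)
    have IH: "(T (Suc h) a a d, d) \<in> alt_comp ?X ?Y (Suc (Suc (Suc (2 * k))))"
      using Suc.IH[of "Suc h"] Suc.prems by simp
    have s: "(T h a a d, T h a b d) \<in> ?X" "(T h a b d, T h a c d) \<in> ?Y" "(T h a c d, T (Suc h) a a d) \<in> ?X"
      using step[of h] Suc.prems by auto
    have "(T h a c d, d) \<in> alt_comp ?X ?Y (Suc (Suc (Suc (2 * k))))"
      using alt_comp_absorb[OF transX] s(3) IH by blast
    then have "(T h a b d, d) \<in> ?Y O alt_comp ?X ?Y (Suc (Suc (Suc (2 * k))))" using s(2) by blast
    then have "(T h a a d, d) \<in> ?X O (?Y O alt_comp ?X ?Y (Suc (Suc (Suc (2 * k)))))" using s(1) by blast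
    moreover have "Suc (Suc (Suc (2 * Suc k))) = Suc (Suc (Suc (Suc (Suc (2 * k)))))" by simp
    ultimately show ?case by (simp only: alt_comp3)
  qed
  show "pr \<in> alt_comp ?X ?Y (2 * n - 1)"
  proof (cases "n \<ge> 2")
    case True
    have "(T 1 a a d, d) \<in> alt_comp ?X ?Y (Suc (Suc (Suc (2 * (n - 2)))))"
      using main[of 1 "n - 2"] True by simp
    moreover have "T 1 a a d = a" using Tst[of 0 a d] T0 carr True by simp
    moreover have "Suc (Suc (Suc (2 * (n - 2)))) = 2 * n - 1" using True by simp
    ultimately show ?thesis using pr_eq by simp
  next
    case False
    then consider "n = 0" | "n = 1" by linarith
    then show ?thesis
    proof cases
      case 1
      then have "a = d" using T0[of a a d] Tn[of a a d] carr by simp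
      then show ?thesis using pr_eq 1 by simp
    next
      case 2
      then have "a = d" using Tst[of 0 a d] T0[of a d d] Tn[of a a d] carr by simp
      then show ?thesis using pr_eq 2 refl[OF eqa carr(1)] refl[OF eqb carr(1)] by simp
    qed
  qed
qed

lemma part2_day:
  fixes ar :: "'f \<Rightarrow> nat"
  assumes var: "variety ar E" and dj: "directed_jonsson ar E n"
  shows "day_modular ar E (2 * n - 1)"
proof -
  obtain t where tin: "\<forall>h\<le>n. t h \<in> trms_in ar 3" and t0: "eqth ar E (t 0) vx" and tn: "eqth ar E (t n) vz"
    and tid: "\<forall>h\<le>n. eqth ar E (app3 (t h) vx vy vx) vx"
    and tst: "\<forall>h<n. eqth ar E (app3 (t h) vx vz vz) (app3 (t (Suc h)) vx vx vz)"
    using dj unfolding directed_jonsson_def by blast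
  define m where "m = 2 * n - 1"
  define u where "u k = (if even k then app3 (t (k div 2)) vx vz vw else app3 (t (Suc k div 2)) vx vy vw)" for k
  have idx: "(if even k then k div 2 else Suc k div 2) \<le> n" if "k \<le> m" for k
    using that unfolding m_def by (auto elim!: evenE oddE)
  have wfv: "\<forall>x. wf_trm ar (Var x :: ('f, nat) trm)" by simp
  have uin: "u k \<in> trms_in ar 4" if "k \<le> m" for k
  proof -
    have T: "t j \<in> trms_in ar 3" if "j \<le> n" for j using tin that by blast
    show ?thesis
      using T[OF idx[OF that]] vars_app3[of "t (k div 2)" vx vz vw] vars_app3[of "t (Suc k div 2)" vx vy vw]
      by (auto simp: u_def trms_in_def intro!: wf_app3 split: if_splits)
  qed
  have uid: "eqth ar E (app4 (u k) vx vy vy vx) vx" if "k \<le> m" for k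
  proof -
    have "app4 (u k) vx vy vy vx = app3 (t (if even k then k div 2 else Suc k div 2)) vx vy vx"
      by (simp add: u_def app4_app3)
    then show ?thesis using tid idx[OF that] by simp
  qed
  have sig: "\<forall>x. wf_trm ar ((\<lambda>i. if i = 0 then vx else if i = 1 then vz else vw) x :: ('f, nat) trm)" by simp
  have sig2: "\<forall>x. wf_trm ar ((\<lambda>i. if i = 0 then vx else if i = 1 then vy else vw) x :: ('f, nat) trm)" by simp
  have u0: "eqth ar E (u 0) vx"
    using eqth_subst[OF t0 sig] by (simp add: u_def app3_def)
  have um: "eqth ar E (u m) vw"
  proof (cases "n = 0")
    case True
    then show ?thesis using eqth_subst[OF tn sig] by (simp add: u_def app3_def m_def)
  next
    case False
    then have "odd m" "Suc m div 2 = n" unfolding m_def by auto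
    then have "u m = app3 (t n) vx vy vw" by (simp add: u_def)
    then show ?thesis using eqth_subst[OF tn sig2] by (simp add: app3_def One_nat_def cong: if_cong)
  qed
  have ueven: "eqth ar E (app4 (u k) vx vx vw vw) (app4 (u (Suc k)) vx vx vw vw)" if "k < m" "even k" for k
  proof -
    obtain h where h: "k = 2 * h" using \<open>even k\<close> by (auto elim: evenE)
    have hn: "h < n" using that h unfolding m_def by simp
    have s: "\<forall>x. wf_trm ar ((\<lambda>i. if i = 2 then vw else Var i) x :: ('f, nat) trm)" by simp
    have "eqth ar E (app3 (t h) vx vw vw) (app3 (t (Suc h)) vx vx vw)"
      using eqth_subst[OF tst[rule_format, OF hn] s] by (simp add: subst_app3)
    moreover have "app4 (u k) vx vx vw vw = app3 (t h) vx vw vw"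
      using h by (simp add: u_def app4_app3)
    moreover have "app4 (u (Suc k)) vx vx vw vw = app3 (t (Suc h)) vx vx vw"
      using h by (simp add: u_def app4_app3)
    ultimately show ?thesis by simp
  qed
  have uodd: "eqth ar E (app4 (u k) vx vy vy vw) (app4 (u (Suc k)) vx vy vy vw)" if "k < m" "odd k" for k
  proof -
    obtain h where h: "k = 2 * h + 1" using \<open>odd k\<close> by (auto elim: oddE)
    have "app4 (u k) vx vy vy vw = app3 (t (Suc h)) vx vy vw"
      using h by (simp add: u_def app4_app3)
    moreover have "app4 (u (Suc k)) vx vy vy vw = app3 (t (Suc h)) vx vy vw"
      using h by (simp add: u_def app4_app3)
    moreover have "wf_trm ar (app3 (t (Suc h)) vx vy vw)"
      using uin[of k] that h by (auto simp: u_def trms_in_def)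
    ultimately show ?thesis by (simp add: eqth.eq_refl)
  qed
  show ?thesis unfolding day_modular_def m_def[symmetric]
    by (rule exI[of _ u]) (use uin uid u0 um ueven uodd in auto)
qed


definition med :: "int \<Rightarrow> int \<Rightarrow> int \<Rightarrow> int" where
  "med a b c = max (min a b) (min (max a b) c)"

definition gP :: "nat \<Rightarrow> nat \<Rightarrow> int \<Rightarrow> int \<Rightarrow> int" where
  "gP n h x z = (if h = n then z else med x z (if x < z then int h - 1 else int n - int h))"

definition gQ :: "nat \<Rightarrow> nat \<Rightarrow> int \<Rightarrow> int \<Rightarrow> int" where
  "gQ n h x z = (if h = n then z else med x z (if x < z then int h - 1 else int n - int h + 1))"

definition Pop :: "nat \<Rightarrow> nat \<Rightarrow> int \<Rightarrow> int \<Rightarrow> int \<Rightarrow> int" where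
  "Pop n h x y z = med (gP n h x z) (gP n (Suc h) x z) y"

definition Qnum :: "nat \<Rightarrow> nat \<Rightarrow> int \<Rightarrow> int \<Rightarrow> int \<Rightarrow> int" where
  "Qnum n h x y z = med (gQ n h x z) (gQ n (Suc h) x z) y"

lemma med_mono: "a \<le> a' \<Longrightarrow> b \<le> b' \<Longrightarrow> c \<le> c' \<Longrightarrow> med a b c \<le> med a' b' c'"
  by (auto simp: med_def max_def min_def)

lemma med_shift: "med (a + 1) (b + 1) (c + 1) = med a b c + 1"
  by (auto simp: med_def max_def min_def)

lemma med_band: "a \<le> a' \<Longrightarrow> a' \<le> a + 1 \<Longrightarrow> b \<le> b' \<Longrightarrow> b' \<le> b + 1 \<Longrightarrow> c \<le> c' \<Longrightarrow> c' \<le> c + 1 \<Longrightarrow>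
   med a b c \<le> med a' b' c' \<and> med a' b' c' \<le> med a b c + 1"
  using med_mono[of a a' b b' c c'] med_mono[of a' "a+1" b' "b+1" c' "c+1"] med_shift[of a b c] by simp

lemma med_same[simp]: "med x x y = x"
  by (auto simp: med_def max_def min_def)

lemma g_band:
  assumes "xp \<le> xq" "xq \<le> xp + 1" "zp \<le> zq" "zq \<le> zp + 1" "h \<le> n"
  shows "gP n h xp zp \<le> gQ n h xq zq \<and> gQ n h xq zq \<le> gP n h xp zp + 1"
  using assms by (auto simp: gP_def gQ_def med_def max_def min_def)

lemma med_same2[simp]: "med x y x = x" "med y x x = x" "med x y y = y"
  by (auto simp: med_def max_def min_def)

lemma med_between: "min a b \<le> med a b c \<and> med a b c \<le> max a b"
  by (auto simp: med_def max_def min_def)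

lemma gP_between: "min x z \<le> gP n h x z \<and> gP n h x z \<le> max x z"
  by (auto simp: gP_def med_def max_def min_def)

lemma gQ_between: "min x z \<le> gQ n h x z \<and> gQ n h x z \<le> max x z"
  by (auto simp: gQ_def med_def max_def min_def)

lemma Pop_range: "0 \<le> x \<Longrightarrow> x \<le> M \<Longrightarrow> 0 \<le> y \<Longrightarrow> y \<le> M \<Longrightarrow> 0 \<le> z \<Longrightarrow> z \<le> M \<Longrightarrow>
    0 \<le> Pop n h x y z \<and> Pop n h x y z \<le> M"
  using gP_between[of x z n h] gP_between[of x z n "Suc h"] med_between[of "gP n h x z" "gP n (Suc h) x z" y]
  unfolding Pop_def by (auto simp: max_def min_def split: if_splits)

lemma Qnum_range: "0 \<le> x \<Longrightarrow> x \<le> M \<Longrightarrow> 0 \<le> y \<Longrightarrow> y \<le> M \<Longrightarrow> 0 \<le> z \<Longrightarrow> z \<le> M \<Longrightarrow>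
    0 \<le> Qnum n h x y z \<and> Qnum n h x y z \<le> M"
  using gQ_between[of x z n h] gQ_between[of x z n "Suc h"] med_between[of "gQ n h x z" "gQ n (Suc h) x z" y]
  unfolding Qnum_def by (auto simp: max_def min_def split: if_splits)

lemma Pop_id: "Pop n h x y x = x"
  by (simp add: Pop_def gP_def)

lemma Qnum_id: "Qnum n h x y x = x"
  by (simp add: Qnum_def gQ_def)

lemma Pop_1: "2 \<le> n \<Longrightarrow> 0 \<le> x \<Longrightarrow> x \<le> int n - 1 \<Longrightarrow> Pop n 1 x x z = x"
  by (simp add: Pop_def gP_def med_def max_def min_def)

lemma Qnum_1: "2 \<le> n \<Longrightarrow> 0 \<le> x \<Longrightarrow> x \<le> int n \<Longrightarrow> Qnum n 1 x x z = x"
  by (simp add: Qnum_def gQ_def med_def max_def min_def)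

lemma Pop_last: "2 \<le> n \<Longrightarrow> Pop n (n - 1) x z z = z"
  by (simp add: Pop_def gP_def)

lemma Qnum_last: "2 \<le> n \<Longrightarrow> Qnum n (n - 1) x z z = z"
  by (simp add: Qnum_def gQ_def)

lemma med_mid: "a \<le> b \<Longrightarrow> b \<le> c \<Longrightarrow> med a b c = b" "c \<le> b \<Longrightarrow> b \<le> a \<Longrightarrow> med a b c = b"
  "a \<le> b \<Longrightarrow> b \<le> c \<Longrightarrow> med b c a = b" "c \<le> b \<Longrightarrow> b \<le> a \<Longrightarrow> med b c a = b"
  by (auto simp: med_def max_def min_def)

lemma gP_up: "x < z \<Longrightarrow> Suc h \<le> n \<Longrightarrow> gP n h x z \<le> gP n (Suc h) x z"
  using gP_between[of x z n h] by (auto simp: gP_def med_def max_def min_def)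

lemma gP_down: "z < x \<Longrightarrow> Suc h \<le> n \<Longrightarrow> gP n (Suc h) x z \<le> gP n h x z"
  using gP_between[of x z n h] by (auto simp: gP_def med_def max_def min_def)

lemma gQ_up: "x < z \<Longrightarrow> Suc h \<le> n \<Longrightarrow> gQ n h x z \<le> gQ n (Suc h) x z"
  using gQ_between[of x z n h] by (auto simp: gQ_def med_def max_def min_def)

lemma gQ_down: "z < x \<Longrightarrow> Suc h \<le> n \<Longrightarrow> gQ n (Suc h) x z \<le> gQ n h x z"
  using gQ_between[of x z n h] by (auto simp: gQ_def med_def max_def min_def)

lemma Pop_step0: "Suc (Suc h) \<le> n \<Longrightarrow> Pop n h x z z = Pop n (Suc h) x x z"
proof -
  assume a: "Suc (Suc h) \<le> n"
  consider "x < z" | "z < x" | "x = z" by linarith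
  then show ?thesis
  proof cases
    case 1
    then show ?thesis using gP_up[OF 1, of h n] gP_up[OF 1, of "Suc h" n] gP_between[of x z n "Suc h"] a
      unfolding Pop_def by (subst med_mid(1), simp_all, subst med_mid(3), simp_all)
  next
    case 2
    then show ?thesis using gP_down[OF 2, of h n] gP_down[OF 2, of "Suc h" n] gP_between[of x z n "Suc h"] a
      unfolding Pop_def by (subst med_mid(2), simp_all, subst med_mid(4), simp_all)
  next
    case 3 then show ?thesis by (simp add: Pop_def gP_def)
  qed
qed

lemma Qnum_step0: "Suc (Suc h) \<le> n \<Longrightarrow> Qnum n h x z z = Qnum n (Suc h) x x z"
proof -
  assume a: "Suc (Suc h) \<le> n"
  consider "x < z" | "z < x" | "x = z" by linarith
  then show ?thesis
  proof cases
    case 1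
    then show ?thesis using gQ_up[OF 1, of h n] gQ_up[OF 1, of "Suc h" n] gQ_between[of x z n "Suc h"] a
      unfolding Qnum_def by (subst med_mid(1), simp_all, subst med_mid(3), simp_all)
  next
    case 2
    then show ?thesis using gQ_down[OF 2, of h n] gQ_down[OF 2, of "Suc h" n] gQ_between[of x z n "Suc h"] a
      unfolding Qnum_def by (subst med_mid(2), simp_all, subst med_mid(4), simp_all)
  next
    case 3 then show ?thesis by (simp add: Qnum_def gQ_def)
  qed
qed

lemma Pop_step: "1 \<le> h \<Longrightarrow> Suc h < n \<Longrightarrow> 0 \<le> x \<Longrightarrow> x \<le> int n - 1 \<Longrightarrow> 0 \<le> z \<Longrightarrow> z \<le> int n - 1 \<Longrightarrow>
   Pop n h x z z = Pop n (Suc h) x x z"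
  by (rule Pop_step0) simp

lemma Qnum_step: "1 \<le> h \<Longrightarrow> Suc h < n \<Longrightarrow> 0 \<le> x \<Longrightarrow> x \<le> int n \<Longrightarrow> 0 \<le> z \<Longrightarrow> z \<le> int n \<Longrightarrow>
   Qnum n h x z z = Qnum n (Suc h) x x z"
  by (rule Qnum_step0) simp

definition band :: "int \<Rightarrow> int \<Rightarrow> bool" where
  "band p q \<longleftrightarrow> p \<le> q \<and> q \<le> p + 1"

lemma NNN: "band xp xq \<Longrightarrow> band yp yq \<Longrightarrow> band zp zq \<Longrightarrow> Suc h \<le> n \<Longrightarrow>
   band (Pop n h xp yp zp) (Qnum n h xq yq zq)"
  unfolding band_def Pop_def Qnum_def
  using g_band[of xp xq zp zq h n] g_band[of xp xq zp zq "Suc h" n]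
  by (intro med_band) auto


lemma NSN_a: "band xp xq \<Longrightarrow> band zp zq \<Longrightarrow> 0 \<le> xp \<Longrightarrow> xp \<le> int n - 1 \<Longrightarrow> 0 \<le> zp \<Longrightarrow> zp \<le> int n - 1 \<Longrightarrow>
   1 \<le> h \<Longrightarrow> h < n \<Longrightarrow>
   gP n h xp zp \<le> med xq zq (if xq < zq then int h else int n - int h) \<and>
   med xq zq (if xq < zq then int h else int n - int h) \<le> gP n h xp zp + 1"
  unfolding band_def gP_def
  by (auto simp: med_def max_def min_def)

lemma NSN_b: "band xp xq \<Longrightarrow> band zp zq \<Longrightarrow> 0 \<le> xp \<Longrightarrow> xp \<le> int n - 1 \<Longrightarrow> 0 \<le> zp \<Longrightarrow> zp \<le> int n - 1 \<Longrightarrow>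
   1 \<le> h \<Longrightarrow> h < n \<Longrightarrow>
   gP n (Suc h) xp zp \<le> med xq zq (if xq < zq then int h else int n - int h) \<and>
   med xq zq (if xq < zq then int h else int n - int h) \<le> gP n (Suc h) xp zp + 1"
  unfolding band_def gP_def
  by (auto simp: med_def max_def min_def)

lemma NSN: "band xp xq \<Longrightarrow> band zp zq \<Longrightarrow> 0 \<le> xp \<Longrightarrow> xp \<le> int n - 1 \<Longrightarrow> 0 \<le> zp \<Longrightarrow> zp \<le> int n - 1 \<Longrightarrow>
   1 \<le> h \<Longrightarrow> h < n \<Longrightarrow>
   band (Pop n h xp yp zp) (med xq zq (if xq < zq then int h else int n - int h))"
  using NSN_a[of xp xq zp zq n h] NSN_b[of xp xq zp zq n h]
    med_between[of "gP n h xp zp" "gP n (Suc h) xp zp" yp]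
  unfolding band_def Pop_def by (auto simp: max_def min_def split: if_splits)

lemma g2_eq: "2 \<le> n \<Longrightarrow> 0 \<le> xp \<Longrightarrow> xp \<le> int n - 1 \<Longrightarrow> 0 \<le> zp \<Longrightarrow> zp \<le> int n - 1 \<Longrightarrow>
  gP n 2 xp zp = (if xp < zp \<and> xp = 0 then 1 else if zp < xp \<and> xp = int n - 1 then int n - 2 else xp)"
  unfolding gP_def by (auto simp: med_def max_def min_def)

lemma gnm1_eq: "2 \<le> n \<Longrightarrow> 0 \<le> xp \<Longrightarrow> xp \<le> int n - 1 \<Longrightarrow> 0 \<le> zp \<Longrightarrow> zp \<le> int n - 1 \<Longrightarrow>
  gP n (n - 1) xp zp = (if xp < zp \<and> zp = int n - 1 then int n - 2 else if zp < xp \<and> zp = 0 then 1 else zp)"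
  unfolding gP_def by (auto simp: med_def max_def min_def of_nat_diff)

lemma g1_eq: "2 \<le> n \<Longrightarrow> 0 \<le> xp \<Longrightarrow> xp \<le> int n - 1 \<Longrightarrow> gP n 1 xp zp = xp"
  unfolding gP_def by (auto simp: med_def max_def min_def)

lemma caseB: "band xp xq \<Longrightarrow> band yp yq \<Longrightarrow> 0 \<le> xp \<Longrightarrow> xp \<le> int n - 1 \<Longrightarrow> 0 \<le> zp \<Longrightarrow> zp \<le> int n - 1 \<Longrightarrow>
   0 \<le> yp \<Longrightarrow> yp \<le> int n - 1 \<Longrightarrow> 2 \<le> n \<Longrightarrow>
   band (Pop n 1 xp yp zp) (med xq yq (med 1 xq (int n - 1)))"
  unfolding Pop_def using g1_eq[of n xp zp] g2_eq[of n xp zp]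
  by (simp add: numeral_2_eq_2) (auto simp: band_def med_def max_def min_def)

lemma caseC: "band yp yq \<Longrightarrow> band zp zq \<Longrightarrow> 0 \<le> xp \<Longrightarrow> xp \<le> int n - 1 \<Longrightarrow> 0 \<le> zp \<Longrightarrow> zp \<le> int n - 1 \<Longrightarrow>
   0 \<le> yp \<Longrightarrow> yp \<le> int n - 1 \<Longrightarrow> 2 \<le> n \<Longrightarrow>
   band (Pop n (n - 1) xp yp zp) (med zq yq (med 1 zq (int n - 1)))"
  unfolding Pop_def using gnm1_eq[of n xp zp]
  by (simp add: gP_def) (auto simp: band_def med_def max_def min_def)


definition Qop :: "nat \<Rightarrow> nat \<Rightarrow> int option \<Rightarrow> int option \<Rightarrow> int option \<Rightarrow> int option" where
  "Qop n h xo yo zo = (case xo of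
     Some x \<Rightarrow> (case zo of
        Some z \<Rightarrow> (case yo of Some y \<Rightarrow> Some (Qnum n h x y z)
                            | None \<Rightarrow> Some (med x z (if x < z then int h else int n - int h)))
      | None \<Rightarrow> (case yo of Some y \<Rightarrow> (if h = 1 then Some (med x y (med 1 x (int n - 1))) else None)
                         | None \<Rightarrow> None))
   | None \<Rightarrow> (case zo of
        Some z \<Rightarrow> (case yo of Some y \<Rightarrow> (if h = n - 1 then Some (med z y (med 1 z (int n - 1))) else None)
                            | None \<Rightarrow> None)
      | None \<Rightarrow> None))"

type_synonym elt = "int \<times> int option"

definition Top :: "nat \<Rightarrow> nat \<Rightarrow> elt \<Rightarrow> elt \<Rightarrow> elt \<Rightarrow> elt" where
  "Top n h x y z = (Pop n h (fst x) (fst y) (fst z), Qop n h (snd x) (snd y) (snd z))"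

definition Sn :: "nat \<Rightarrow> elt set" where
  "Sn n = {(p, qo). 0 \<le> p \<and> p \<le> int n - 1 \<and> (\<forall>q. qo = Some q \<longrightarrow> band p q)}"

definition opn :: "nat \<Rightarrow> nat \<Rightarrow> elt list \<Rightarrow> elt" where
  "opn n f xs = (if 1 \<le> f \<and> f < n then Top n f (xs ! 0) (xs ! 1) (xs ! 2) else xs ! 0)"

definition An :: "nat \<Rightarrow> (elt, nat) alg" where
  "An n = (Sn n, opn n)"

abbreviation arn :: "nat \<Rightarrow> nat" where "arn \<equiv> (\<lambda>_. 3)"

definition En :: "nat \<Rightarrow> ((nat, nat) trm \<times> (nat, nat) trm) set" where
  "En n = {(s, t). wf_trm arn s \<and> wf_trm arn t \<and>
     (\<forall>\<rho>. (\<forall>x. \<rho> x \<in> Sn n) \<longrightarrow> eval_trm (An n) \<rho> s = eval_trm (An n) \<rho> t)}"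



lemma Top_closed:
  assumes n: "2 \<le> n" and h: "1 \<le> h" "h < n" and S: "x \<in> Sn n" "y \<in> Sn n" "z \<in> Sn n"
  shows "Top n h x y z \<in> Sn n"
proof -
  obtain xp xo yp yo zp zo where e: "x = (xp, xo)" "y = (yp, yo)" "z = (zp, zo)" by (cases x, cases y, cases z) auto
  have r: "0 \<le> xp" "xp \<le> int n - 1" "0 \<le> yp" "yp \<le> int n - 1" "0 \<le> zp" "zp \<le> int n - 1"
    using S e by (auto simp: Sn_def)
  have P: "0 \<le> Pop n h xp yp zp \<and> Pop n h xp yp zp \<le> int n - 1" using Pop_range r by blast
  have Q: "\<forall>q. Qop n h xo yo zo = Some q \<longrightarrow> band (Pop n h xp yp zp) q"
  proof (cases xo; cases yo; cases zo)
    fix xq yq zq assume c: "xo = Some xq" "yo = Some yq" "zo = Some zq"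
    then show ?thesis using S e NNN[of xp xq yp yq zp zq h n] h by (auto simp: Sn_def Qop_def)
  next
    fix xq zq assume c: "xo = Some xq" "yo = None" "zo = Some zq"
    then show ?thesis using S e NSN[of xp xq zp zq n h yp] h r by (auto simp: Sn_def Qop_def)
  next
    fix xq yq assume c: "xo = Some xq" "yo = Some yq" "zo = None"
    then show ?thesis using S e caseB[of xp xq yp yq n zp] n r by (auto simp: Sn_def Qop_def)
  next
    fix yq zq assume c: "xo = None" "yo = Some yq" "zo = Some zq"
    then show ?thesis using S e caseC[of yp yq zp zq xp n] n r by (auto simp: Sn_def Qop_def)
  qed (auto simp: Qop_def)
  show ?thesis using P Q e by (simp add: Top_def Sn_def)
qed

lemma Top_id: "x \<in> Sn n \<Longrightarrow> Top n h x y x = x"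
  by (cases x; cases "snd x"; cases "snd y") (auto simp: Top_def Qop_def Pop_id Qnum_id)

lemma Top_1: assumes "2 \<le> n" "x \<in> Sn n" shows "Top n 1 x x z = x"
proof -
  obtain xp xo where e: "x = (xp, xo)" by (cases x)
  have "0 \<le> xp" "xp \<le> int n - 1" using assms e by (auto simp: Sn_def)
  moreover have "Qop n 1 xo xo (snd z) = xo"
  proof (cases xo; cases "snd z")
    fix xq zq assume "xo = Some xq" "snd z = Some zq"
    moreover have "0 \<le> xq" "xq \<le> int n" using assms e \<open>xo = Some xq\<close> by (auto simp: Sn_def band_def)
    ultimately show ?thesis using Qnum_1[OF assms(1)] by (simp add: Qop_def)
  qed (auto simp: Qop_def)
  ultimately show ?thesis using e Pop_1[OF assms(1)] by (simp add: Top_def)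
qed

lemma Top_last: assumes "2 \<le> n" shows "Top n (n - 1) x z z = z"
proof -
  have Ql: "Qnum n (n - Suc 0) x z z = z" for x z using Qnum_last[OF assms] by simp
  have "Qop n (n - 1) (snd x) (snd z) (snd z) = snd z"
    using assms by (cases "snd x"; cases "snd z") (auto simp: Qop_def Ql)
  then show ?thesis using Pop_last[OF assms] by (simp add: Top_def)
qed

lemma Top_step: assumes "1 \<le> h" "Suc h < n" "x \<in> Sn n" "z \<in> Sn n"
  shows "Top n h x z z = Top n (Suc h) x x z"
proof -
  obtain xp xo zp zo where e: "x = (xp, xo)" "z = (zp, zo)" by (cases x, cases z)
  have r: "0 \<le> xp" "xp \<le> int n - 1" "0 \<le> zp" "zp \<le> int n - 1" using assms e by (auto simp: Sn_def)
  have "Qop n h xo zo zo = Qop n (Suc h) xo xo zo"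
  proof (cases xo; cases zo)
    fix xq zq assume c: "xo = Some xq" "zo = Some zq"
    have "0 \<le> xq" "xq \<le> int n" "0 \<le> zq" "zq \<le> int n" using assms e c by (auto simp: Sn_def band_def)
    then show ?thesis using c Qnum_step[OF assms(1,2)] by (simp add: Qop_def)
  qed (use assms in \<open>auto simp: Qop_def\<close>)
  then show ?thesis using e Pop_step[OF assms(1,2) r] by (simp add: Top_def)
qed

lemma Qop_None: "(xo = None) = (xo' = None) \<Longrightarrow> (yo = None) = (yo' = None) \<Longrightarrow> (zo = None) = (zo' = None) \<Longrightarrow>
  (Qop n h xo yo zo = None) = (Qop n h xo' yo' zo' = None)"
  by (cases xo; cases xo'; cases yo; cases yo'; cases zo; cases zo') (auto simp: Qop_def)

lemma len3: "length xs = 3 \<Longrightarrow> \<exists>a b c. xs = [a, b, c]"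
  by (auto simp: numeral_3_eq_3 length_Suc_conv)

lemma is_alg_An: "2 \<le> n \<Longrightarrow> is_alg arn (An n)"
  unfolding is_alg_def An_def
proof (intro allI impI)
  fix f and xs :: "elt list"
  assume n: "2 \<le> n" and a: "length xs = 3 \<and> set xs \<subseteq> fst (Sn n, opn n)"
  then obtain x y z where "xs = [x, y, z]" using len3 by blast
  then show "snd (Sn n, opn n) f xs \<in> fst (Sn n, opn n)"
    using a Top_closed[OF n] by (auto simp: opn_def)
qed

definition kr :: "nat \<Rightarrow> (elt \<Rightarrow> 'k) \<Rightarrow> (elt \<times> elt) set" where
  "kr n key = {(x, y). x \<in> Sn n \<and> y \<in> Sn n \<and> key x = key y}"

lemma kr_cong:
  assumes n: "2 \<le> n"
    and K: "\<And>h x y z x' y' z'. 1 \<le> h \<Longrightarrow> h < n \<Longrightarrow> key x = key x' \<Longrightarrow> key y = key y' \<Longrightarrow> key z = key z' \<Longrightarrow>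
        key (Top n h x y z) = key (Top n h x' y' z')"
  shows "congruence arn (An n) (kr n key)"
  unfolding congruence_def
proof (intro conjI allI impI)
  show "equiv (fst (An n)) (kr n key)"
    by (auto simp: equiv_def refl_on_def sym_def trans_def kr_def An_def)
  fix f and xs ys :: "elt list"
  assume a: "length xs = arn f \<and> list_all2 (\<lambda>a b. (a, b) \<in> kr n key) xs ys"
  then obtain x y z where xs: "xs = [x, y, z]" using len3 by blast
  then obtain x' y' z' where ys: "ys = [x', y', z']" using a len3[of ys] list_all2_lengthD by fastforce
  have r: "x \<in> Sn n" "y \<in> Sn n" "z \<in> Sn n" "x' \<in> Sn n" "y' \<in> Sn n" "z' \<in> Sn n"
     "key x = key x'" "key y = key y'" "key z = key z'"
    using a xs ys by (auto simp: kr_def)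
  show "(snd (An n) f xs, snd (An n) f ys) \<in> kr n key"
    using r xs ys K[of f x x' y y' z z'] Top_closed[OF n, of f] by (auto simp: An_def opn_def kr_def)
qed

lemma cong_beta: "2 \<le> n \<Longrightarrow> congruence arn (An n) (kr n fst)"
  by (rule kr_cong) (auto simp: Top_def)

lemma cong_gamma: "2 \<le> n \<Longrightarrow> congruence arn (An n) (kr n snd)"
  by (rule kr_cong) (auto simp: Top_def)

lemma cong_alpha: "2 \<le> n \<Longrightarrow> congruence arn (An n) (kr n (\<lambda>e. snd e = None))"
  apply (rule kr_cong, assumption)
  apply (simp only: Top_def snd_conv)
  apply (rule Qop_None)
    apply auto
  done


lemma variety_En: "variety arn (En n)"
  by (auto simp: variety_def En_def)

lemma in_variety_An: "2 \<le> n \<Longrightarrow> in_variety arn (En n) (An n)"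
  using is_alg_An by (auto simp: in_variety_def En_def An_def)

lemma eqth_En_iff: assumes "2 \<le> n" "wf_trm arn s" "wf_trm arn t"
  shows "eqth arn (En n) s t \<longleftrightarrow> (\<forall>\<rho>. (\<forall>x. \<rho> x \<in> Sn n) \<longrightarrow> eval_trm (An n) \<rho> s = eval_trm (An n) \<rho> t)"
proof
  assume "eqth arn (En n) s t"
  then show "\<forall>\<rho>. (\<forall>x. \<rho> x \<in> Sn n) \<longrightarrow> eval_trm (An n) \<rho> s = eval_trm (An n) \<rho> t"
    using eqth_sound[OF _ in_variety_An[OF assms(1)]] by (auto simp: An_def)
next
  assume "\<forall>\<rho>. (\<forall>x. \<rho> x \<in> Sn n) \<longrightarrow> eval_trm (An n) \<rho> s = eval_trm (An n) \<rho> t"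
  then have "(s, t) \<in> En n" using assms by (auto simp: En_def)
  from eqth.eq_ax[OF this, where \<sigma>=Var] show "eqth arn (En n) s t" by (simp add: subst_Var)
qed

lemma eval_vars: "(\<forall>x\<in>vars_trm t. \<rho> x = \<rho>' x) \<Longrightarrow> eval_trm A \<rho> t = eval_trm A \<rho>' t"
proof (induction t)
  case (Fun f ts)
  then have "map (eval_trm A \<rho>) ts = map (eval_trm A \<rho>') ts" by auto
  then show ?case by (metis eval_trm.simps(2))
qed simp

definition tt :: "nat \<Rightarrow> nat \<Rightarrow> (nat, nat) trm" where
  "tt n h = (if h = 0 then vx else if h = n then vz else Fun h [vx, vy, vz])"

lemma eval_tt: "2 \<le> n \<Longrightarrow> h \<le> n \<Longrightarrow> eval_trm (An n) \<rho> (tt n h) =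
   (if h = 0 then \<rho> 0 else if h = n then \<rho> 2 else Top n h (\<rho> 0) (\<rho> 1) (\<rho> 2))"
  by (auto simp: tt_def An_def opn_def)

lemma dj_An: assumes n: "2 \<le> n" shows "directed_jonsson arn (En n) n"
  unfolding directed_jonsson_def
proof (intro exI[of _ "tt n"] conjI allI impI)
  fix h assume "h \<le> n"
  show "tt n h \<in> trms_in arn 3" by (auto simp: tt_def trms_in_def)
next
  show "eqth arn (En n) (tt n 0) vx" using n by (auto simp: tt_def intro: eqth.eq_refl)
next
  show "eqth arn (En n) (tt n n) vz" using n by (auto simp: tt_def intro: eqth.eq_refl)
next
  fix h assume h: "h \<le> n"
  have wf: "wf_trm arn (app3 (tt n h) vx vy vx)" by (rule wf_app3) (auto simp: tt_def)
  show "eqth arn (En n) (app3 (tt n h) vx vy vx) vx"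
    unfolding eqth_En_iff[OF n wf wf_trm.simps(1)[THEN iffD2, OF TrueI]]
  proof (intro allI impI)
    fix \<rho> :: "nat \<Rightarrow> elt" assume r: "\<forall>x. \<rho> x \<in> Sn n"
    show "eval_trm (An n) \<rho> (app3 (tt n h) vx vy vx) = eval_trm (An n) \<rho> vx"
      using r by (simp add: eval_app3 eval_tt[OF n h] Top_id cong: if_cong)
  qed
next
  fix h assume h: "h < n"
  have wf1: "wf_trm arn (app3 (tt n h) vx vz vz)" by (rule wf_app3) (auto simp: tt_def)
  have wf2: "wf_trm arn (app3 (tt n (Suc h)) vx vx vz)" by (rule wf_app3) (auto simp: tt_def)
  show "eqth arn (En n) (app3 (tt n h) vx vz vz) (app3 (tt n (Suc h)) vx vx vz)"
    unfolding eqth_En_iff[OF n wf1 wf2]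
  proof (intro allI impI)
    fix \<rho> :: "nat \<Rightarrow> elt" assume r: "\<forall>x. \<rho> x \<in> Sn n"
    have e1: "eval_trm (An n) \<rho> (app3 (tt n h) vx vz vz) =
        (if h = 0 then \<rho> 0 else Top n h (\<rho> 0) (\<rho> 2) (\<rho> 2))"
      using h n by (simp add: eval_app3 eval_tt cong: if_cong)
    have e2: "eval_trm (An n) \<rho> (app3 (tt n (Suc h)) vx vx vz) =
        (if Suc h = n then \<rho> 2 else Top n (Suc h) (\<rho> 0) (\<rho> 0) (\<rho> 2))"
      using h n by (simp add: eval_app3 eval_tt cong: if_cong)
    show "eval_trm (An n) \<rho> (app3 (tt n h) vx vz vz) = eval_trm (An n) \<rho> (app3 (tt n (Suc h)) vx vx vz)"
      unfolding e1 e2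
    proof (cases "h = 0")
      case True
      then show "(if h = 0 then \<rho> 0 else Top n h (\<rho> 0) (\<rho> 2) (\<rho> 2)) =
          (if Suc h = n then \<rho> 2 else Top n (Suc h) (\<rho> 0) (\<rho> 0) (\<rho> 2))"
      proof -
        have "Top n 1 (\<rho> 0) (\<rho> 0) (\<rho> 2) = \<rho> 0" using Top_1[OF n] r by blast
        moreover have "Suc 0 \<noteq> n" using n by simp
        ultimately show ?thesis using True by simp
      qed
    next
      case False
      show "(if h = 0 then \<rho> 0 else Top n h (\<rho> 0) (\<rho> 2) (\<rho> 2)) =
          (if Suc h = n then \<rho> 2 else Top n (Suc h) (\<rho> 0) (\<rho> 0) (\<rho> 2))"
      proof (cases "Suc h = n")
        case True
        then have "h = n - 1" by simp
        then show ?thesis using False True Top_last[OF n, of "\<rho> 0" "\<rho> 2"] by simp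
      next
        case F2: False
        have "Top n h (\<rho> 0) (\<rho> 2) (\<rho> 2) = Top n (Suc h) (\<rho> 0) (\<rho> 0) (\<rho> 2)"
          using False F2 h r Top_step[of h n "\<rho> 0" "\<rho> 2"] by simp
        then show ?thesis using False F2 by simp
      qed
    qed
  qed
qed


lemma finite_Sn: "finite (Sn n)"
proof -
  have "Sn n \<subseteq> {0..int n - 1} \<times> insert None (Some ` {0..int n})"
  proof
    fix e assume e: "e \<in> Sn n"
    obtain p qo where pq: "e = (p, qo)" by (cases e)
    show "e \<in> {0..int n - 1} \<times> insert None (Some ` {0..int n})"
      using e pq by (cases qo) (auto simp: Sn_def band_def)
  qed
  then show ?thesis by (rule finite_subset) auto
qed

lemma lf_An: assumes n: "2 \<le> n" shows "locally_finite arn (En n)"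
  unfolding locally_finite_def
proof
  fix k
  let ?T = "trms_in arn k"
  define c0 where "c0 = ((0::int), (None::int option))"
  have c0: "c0 \<in> Sn n" using n by (simp add: c0_def Sn_def)
  define V where "V = {\<rho> :: nat \<Rightarrow> elt. (\<forall>x. \<rho> x \<in> Sn n) \<and> (\<forall>x. k \<le> x \<longrightarrow> \<rho> x = c0)}"
  define ext where "ext f = (\<lambda>x. if x < k then f x else c0)" for f :: "nat \<Rightarrow> elt"
  have "V \<subseteq> ext ` (PiE {..<k} (\<lambda>_. Sn n))"
  proof
    fix \<rho> assume r: "\<rho> \<in> V"
    have "\<rho> = ext (restrict \<rho> {..<k})" using r by (auto simp: V_def ext_def fun_eq_iff)
    moreover have "restrict \<rho> {..<k} \<in> PiE {..<k} (\<lambda>_. Sn n)" using r by (auto simp: V_def)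
    ultimately show "\<rho> \<in> ext ` (PiE {..<k} (\<lambda>_. Sn n))" by blast
  qed
  then have finV: "finite V" by (rule finite_subset) (auto intro!: finite_PiE finite_Sn)
  define key where "key t = restrict (\<lambda>\<rho>. eval_trm (An n) \<rho> t) V" for t
  have keyin: "key t \<in> PiE V (\<lambda>_. Sn n)" if "t \<in> ?T" for t
    using that eval_closed[OF is_alg_An[OF n]] by (auto simp: key_def V_def trms_in_def An_def)
  have cls: "{s \<in> ?T. eqth arn (En n) s t} = {s \<in> ?T. key s = key t}" if t: "t \<in> ?T" for t
  proof -
    have "eqth arn (En n) s t \<longleftrightarrow> key s = key t" if s: "s \<in> ?T" for s
    proof -
      have wf: "wf_trm arn s" "wf_trm arn t" using s t by (auto simp: trms_in_def)
      have "(\<forall>\<rho>::nat \<Rightarrow> elt. (\<forall>x. \<rho> x \<in> Sn n) \<longrightarrow> eval_trm (An n) \<rho> s = eval_trm (An n) \<rho> t) \<longleftrightarrow>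
            (\<forall>\<rho>\<in>V. eval_trm (An n) \<rho> s = eval_trm (An n) \<rho> t)"
      proof
        assume "\<forall>\<rho>. (\<forall>x. \<rho> x \<in> Sn n) \<longrightarrow> eval_trm (An n) \<rho> s = eval_trm (An n) \<rho> t"
        then show "\<forall>\<rho>\<in>V. eval_trm (An n) \<rho> s = eval_trm (An n) \<rho> t" by (auto simp: V_def)
      next
        assume a: "\<forall>\<rho>\<in>V. eval_trm (An n) \<rho> s = eval_trm (An n) \<rho> t"
        show "\<forall>\<rho>. (\<forall>x. \<rho> x \<in> Sn n) \<longrightarrow> eval_trm (An n) \<rho> s = eval_trm (An n) \<rho> t"
        proof (intro allI impI)
          fix \<rho> :: "nat \<Rightarrow> elt" assume r: "\<forall>x. \<rho> x \<in> Sn n"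
          have eV: "ext \<rho> \<in> V" using r c0 by (auto simp: V_def ext_def)
          have "eval_trm (An n) \<rho> s = eval_trm (An n) (ext \<rho>) s"
            using s by (intro eval_vars) (auto simp: ext_def trms_in_def)
          also have "\<dots> = eval_trm (An n) (ext \<rho>) t" using a eV by blast
          also have "\<dots> = eval_trm (An n) \<rho> t"
            using t by (intro eval_vars) (auto simp: ext_def trms_in_def)
          finally show "eval_trm (An n) \<rho> s = eval_trm (An n) \<rho> t" .
        qed
      qed
      also have "\<dots> \<longleftrightarrow> key s = key t"
        unfolding key_def restrict_def fun_eq_iff by auto
      finally show ?thesis using eqth_En_iff[OF n wf] by simp
    qed
    then show ?thesis by blast
  qed
  have eq: "(\<lambda>t. {s \<in> ?T. eqth arn (En n) s t}) ` ?T = (\<lambda>K. {s \<in> ?T. key s = K}) ` (key ` ?T)"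
  proof -
    have "(\<lambda>t. {s \<in> ?T. eqth arn (En n) s t}) ` ?T = (\<lambda>t. {s \<in> ?T. key s = key t}) ` ?T"
      by (rule image_cong) (simp_all add: cls)
    also have "\<dots> = (\<lambda>K. {s \<in> ?T. key s = K}) ` (key ` ?T)" by (simp add: image_image)
    finally show ?thesis .
  qed
  have fk: "finite (key ` ?T)"
  proof -
    have sub: "key ` ?T \<subseteq> PiE V (\<lambda>_. Sn n)" using keyin by blast
    have "finite (PiE V (\<lambda>_. Sn n))" using finV finite_Sn by (rule finite_PiE)
    then show ?thesis using sub by (rule finite_subset[rotated])
  qed
  show "finite ((\<lambda>t. {s \<in> ?T. eqth arn (En n) s t}) ` ?T)" unfolding eq by (rule finite_imageI[OF fk])
qed


lemma kr_key: "(x, y) \<in> kr n key \<Longrightarrow> key x = key y" by (simp add: kr_def)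

lemma not_rev: assumes n: "2 \<le> n" shows "\<not> reversed_modular arn (En n) (2 * n - 1)"
proof
  assume "reversed_modular arn (En n) (2 * n - 1)"
  then obtain u where uin: "\<forall>k\<le>2 * n - 1. u k \<in> trms_in arn 4"
    and uid: "\<forall>k\<le>2 * n - 1. eqth arn (En n) (app4 (u k) vx vy vy vx) vx"
    and u0: "eqth arn (En n) (u 0) vx" and um: "eqth arn (En n) (u (2 * n - 1)) vw"
    and uodd: "\<forall>k<2 * n - 1. odd k \<longrightarrow> eqth arn (En n) (app4 (u k) vx vx vw vw) (app4 (u (Suc k)) vx vx vw vw)"
    and ueven: "\<forall>k<2 * n - 1. even k \<longrightarrow> eqth arn (En n) (app4 (u k) vx vy vy vw) (app4 (u (Suc k)) vx vy vy vw)"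
    unfolding reversed_modular_def by blast
  define m where "m = 2 * n - 1"
  define a where "a = ((0::int), Some (0::int))"
  define b where "b = ((0::int), (None :: int option))"
  define c where "c = (int n - 1, (None :: int option))"
  define d where "d = (int n - 1, Some (int n))"
  have S: "a \<in> Sn n" "b \<in> Sn n" "c \<in> Sn n" "d \<in> Sn n"
    using n by (auto simp: a_def b_def c_def d_def Sn_def band_def)
  have IV: "in_variety arn (En n) (An n)" using in_variety_An[OF n] .
  have cA: "fst (An n) = Sn n" by (simp add: An_def)
  define \<rho> where "\<rho> i = (if i = 0 then a else if i = 1 then b else if i = 2 then c else d)" for i :: nat
  have \<rho>S: "\<forall>i. \<rho> i \<in> Sn n" using S by (simp add: \<rho>_def)
  define e where "e k = eval_trm (An n) \<rho> (u k)" for k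
  have wfu: "wf_trm arn (u k)" if "k \<le> m" for k using uin that by (auto simp: trms_in_def m_def)
  have snd_None: "(snd (e k) = None) = (snd a = None) \<and> e k \<in> Sn n" if k: "k \<le> m" for k
  proof -
    define \<rho>' where "\<rho>' = (\<lambda>i::nat. if i = 0 then a else if i = 1 then b else if i = 2 then b else a)"
    have "eval_trm (An n) \<rho> (app4 (u k) vx vy vy vx) = eval_trm (An n) \<rho> vx"
      using eqth_sound[OF uid[rule_format, OF k[unfolded m_def]] IV] \<rho>S cA by simp
    then have ev': "eval_trm (An n) \<rho>' (u k) = a"
      by (simp add: eval_app4 \<rho>_def \<rho>'_def cong: if_cong)
    have "\<forall>i. (\<rho> i, \<rho>' i) \<in> kr n (\<lambda>e. snd e = None)"
      using S by (auto simp: kr_def \<rho>_def \<rho>'_def a_def b_def c_def d_def)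
    then have "(e k, a) \<in> kr n (\<lambda>e. snd e = None)"
      using eval_cong[OF cong_alpha[OF n] wfu[OF k]] ev' unfolding e_def by metis
    then show ?thesis by (auto simp: kr_def)
  qed
  have evenstep: "snd (e k) = snd (e (Suc k))" if k: "k < m" "even k" for k
  proof -
    define \<rho>' where "\<rho>' = (\<lambda>i::nat. if i = 0 then a else if i = 1 then b else if i = 2 then b else d)"
    have "eval_trm (An n) \<rho> (app4 (u k) vx vy vy vw) = eval_trm (An n) \<rho> (app4 (u (Suc k)) vx vy vy vw)"
      using eqth_sound[OF ueven[rule_format, OF k[unfolded m_def]] IV] \<rho>S cA by simp
    then have eq: "eval_trm (An n) \<rho>' (u k) = eval_trm (An n) \<rho>' (u (Suc k))"
      by (simp add: eval_app4 \<rho>_def \<rho>'_def cong: if_cong)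
    have pw: "\<forall>i. (\<rho> i, \<rho>' i) \<in> kr n snd"
      using S by (auto simp: kr_def \<rho>_def \<rho>'_def a_def b_def c_def d_def)
    have "(e k, eval_trm (An n) \<rho>' (u k)) \<in> kr n snd"
      using eval_cong[OF cong_gamma[OF n] wfu pw] k unfolding e_def by simp
    moreover have "(e (Suc k), eval_trm (An n) \<rho>' (u (Suc k))) \<in> kr n snd"
      using eval_cong[OF cong_gamma[OF n] wfu pw] k unfolding e_def by simp
    ultimately show ?thesis using eq by (auto simp: kr_def)
  qed
  have oddstep: "fst (e k) = fst (e (Suc k))" if k: "k < m" "odd k" for k
  proof -
    define \<rho>' where "\<rho>' = (\<lambda>i::nat. if i = 0 then a else if i = 1 then a else if i = 2 then d else d)"
    have "eval_trm (An n) \<rho> (app4 (u k) vx vx vw vw) = eval_trm (An n) \<rho> (app4 (u (Suc k)) vx vx vw vw)"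
      using eqth_sound[OF uodd[rule_format, OF k[unfolded m_def]] IV] \<rho>S cA by simp
    then have eq: "eval_trm (An n) \<rho>' (u k) = eval_trm (An n) \<rho>' (u (Suc k))"
      by (simp add: eval_app4 \<rho>_def \<rho>'_def cong: if_cong)
    have pw: "\<forall>i. (\<rho> i, \<rho>' i) \<in> kr n fst"
      using S by (auto simp: kr_def \<rho>_def \<rho>'_def a_def b_def c_def d_def)
    have "(e k, eval_trm (An n) \<rho>' (u k)) \<in> kr n fst"
      using eval_cong[OF cong_beta[OF n] wfu pw] k unfolding e_def by simp
    moreover have "(e (Suc k), eval_trm (An n) \<rho>' (u (Suc k))) \<in> kr n fst"
      using eval_cong[OF cong_beta[OF n] wfu pw] k unfolding e_def by simp
    ultimately show ?thesis using eq by (auto simp: kr_def)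
  qed
  have e0: "e 0 = a" using eqth_sound[OF u0 IV] \<rho>S cA by (simp add: e_def \<rho>_def)
  have em: "e m = d" using eqth_sound[OF um IV] \<rho>S cA by (simp add: e_def \<rho>_def m_def)
  define Q where "Q k = the (snd (e k))" for k
  have eQ: "snd (e k) = Some (Q k)" if "k \<le> m" for k
    using snd_None[OF that] by (auto simp: Q_def a_def)
  have bQ: "band (fst (e k)) (Q k)" if "k \<le> m" for k
    using snd_None[OF that] eQ[OF that] by (cases "e k") (auto simp: Sn_def)
  have main: "Q (Suc (2 * i)) \<le> int i" if "Suc (2 * i) \<le> m" for i
    using that
  proof (induction i)
    case 0
    have "Q 1 = Q 0" using evenstep[of 0] eQ[of 0] eQ[of 1] 0 by simp
    then show ?case using eQ[of 0] e0 by (simp add: a_def)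
  next
    case (Suc i)
    let ?k = "Suc (2 * i)"
    have IH: "Q ?k \<le> int i" using Suc by simp
    have "fst (e (Suc ?k)) = fst (e ?k)" using oddstep[of ?k] Suc.prems by simp
    moreover have "Q (Suc (Suc ?k)) = Q (Suc ?k)"
      using evenstep[of "Suc ?k"] eQ[of "Suc ?k"] eQ[of "Suc (Suc ?k)"] Suc.prems by simp
    moreover have "band (fst (e (Suc ?k))) (Q (Suc ?k))" using bQ Suc.prems by simp
    moreover have "band (fst (e ?k)) (Q ?k)" using bQ Suc.prems by simp
    ultimately show ?case using IH by (simp add: band_def)
  qed
  have mm: "Suc (2 * (n - 1)) = m" using n by (simp add: m_def)
  have "Q m \<le> int (n - 1)" using main[of "n - 1"] by (simp only: mm)
  moreover have "Q m = int n" using em eQ[of m] by (simp add: d_def)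
  ultimately show False using n by simp
qed

lemma day_rev:
  fixes ar :: "'f \<Rightarrow> nat"
  assumes "day_modular ar E m" shows "reversed_modular ar E (Suc m)"
proof -
  obtain u where uin: "\<forall>k\<le>m. u k \<in> trms_in ar 4"
    and uid: "\<forall>k\<le>m. eqth ar E (app4 (u k) vx vy vy vx) vx"
    and u0: "eqth ar E (u 0) vx" and um: "eqth ar E (u m) vw"
    and ueven: "\<forall>k<m. even k \<longrightarrow> eqth ar E (app4 (u k) vx vx vw vw) (app4 (u (Suc k)) vx vx vw vw)"
    and uodd: "\<forall>k<m. odd k \<longrightarrow> eqth ar E (app4 (u k) vx vy vy vw) (app4 (u (Suc k)) vx vy vy vw)"
    using assms unfolding day_modular_def by blast
  define v where "v k = (case k of 0 \<Rightarrow> vx | Suc j \<Rightarrow> u j)" for k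
  have wfx: "wf_trm ar (vx :: ('f, nat) trm)" by simp
  have s4: "\<forall>x. wf_trm ar ((\<lambda>i. if i = 0 then vx else if i = 1 then vy else if i = 2 then vy else vw) x :: ('f, nat) trm)"
    by simp
  have first: "eqth ar E (app4 (v 0) vx vy vy vw) (app4 (v (Suc 0)) vx vy vy vw)"
  proof -
    have "eqth ar E (app4 (u 0) vx vy vy vw) vx"
      using eqth_subst[OF u0 s4] by (simp add: app4_def One_nat_def cong: if_cong)
    then show ?thesis by (simp add: v_def eqth.eq_sym)
  qed
  show ?thesis unfolding reversed_modular_def
  proof (intro exI[of _ v] conjI allI impI)
    fix k assume "k \<le> Suc m"
    then show "v k \<in> trms_in ar 4" using uin by (cases k) (auto simp: v_def trms_in_def)
  next
    fix k assume "k \<le> Suc m"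
    then show "eqth ar E (app4 (v k) vx vy vy vx) vx" using uid
      by (cases k) (auto simp: v_def intro: eqth.eq_refl)
  next
    show "eqth ar E (v 0) vx" by (simp add: v_def eqth.eq_refl)
  next
    show "eqth ar E (v (Suc m)) vw" using um by (simp add: v_def)
  next
    fix k assume k: "k < Suc m" "odd k"
    then obtain j where j: "k = Suc j" "even j" "j < m" by (cases k) auto
    then show "eqth ar E (app4 (v k) vx vx vw vw) (app4 (v (Suc k)) vx vx vw vw)"
      using ueven by (simp add: v_def)
  next
    fix k assume k: "k < Suc m" "even k"
    show "eqth ar E (app4 (v k) vx vy vy vw) (app4 (v (Suc k)) vx vy vy vw)"
    proof (cases k)
      case 0 then show ?thesis using first by simp
    next
      case (Suc j)
      then have "odd j" "j < m" using k by auto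
      then show ?thesis using uodd Suc by (simp add: v_def)
    qed
  qed
qed

lemma not_day: assumes n: "2 \<le> n" shows "\<not> day_modular arn (En n) (2 * n - 2)"
proof
  assume "day_modular arn (En n) (2 * n - 2)"
  then have "reversed_modular arn (En n) (Suc (2 * n - 2))" by (rule day_rev)
  moreover have "Suc (2 * n - 2) = 2 * n - 1" using n by simp
  ultimately show False using not_rev[OF n] by simp
qed


theorem theorem5p1:
  shows "(\<forall>n::nat. n \<ge> 2 \<longrightarrow>
            (\<exists>(ar :: nat \<Rightarrow> nat) E. variety ar E \<and> locally_finite ar E \<and>
               directed_jonsson ar E n \<and>
               \<not> reversed_modular ar E (2 * n - 1) \<and> \<not> day_modular ar E (2 * n - 2)))
       \<and> (\<forall>(ar :: 'f \<Rightarrow> nat) E (n::nat). variety ar E \<and> directed_jonsson ar E n \<longrightarrow>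
            (\<forall>(A :: ('a, 'f) alg) \<alpha> \<beta> \<gamma>. in_variety ar E A \<and>
                congruence ar A \<alpha> \<and> congruence ar A \<beta> \<and> congruence ar A \<gamma> \<longrightarrow>
                \<alpha> \<inter> (\<beta> O \<gamma> O \<beta>) \<subseteq> alt_comp (\<alpha> \<inter> \<beta>) (\<alpha> \<inter> \<gamma>) (2 * n - 1))
            \<and> day_modular ar E (2 * n - 1))"
proof (rule conjI)
  show "\<forall>n::nat. n \<ge> 2 \<longrightarrow>
            (\<exists>(ar :: nat \<Rightarrow> nat) E. variety ar E \<and> locally_finite ar E \<and>
               directed_jonsson ar E n \<and>
               \<not> reversed_modular ar E (2 * n - 1) \<and> \<not> day_modular ar E (2 * n - 2))"
    using variety_En lf_An dj_An not_rev not_day by blast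
  show "\<forall>(ar :: 'f \<Rightarrow> nat) E (n::nat). variety ar E \<and> directed_jonsson ar E n \<longrightarrow>
            (\<forall>(A :: ('a, 'f) alg) \<alpha> \<beta> \<gamma>. in_variety ar E A \<and>
                congruence ar A \<alpha> \<and> congruence ar A \<beta> \<and> congruence ar A \<gamma> \<longrightarrow>
                \<alpha> \<inter> (\<beta> O \<gamma> O \<beta>) \<subseteq> alt_comp (\<alpha> \<inter> \<beta>) (\<alpha> \<inter> \<gamma>) (2 * n - 1))
            \<and> day_modular ar E (2 * n - 1)"
    using part2_cong part2_day by blast
qed

end
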